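(* Let $A$ be an integral quantum B-algebra, let $X,F\in U(A)$ and let $F$ be a filter of $A$. Then: (1) $\mu_F(X)=\big(\mu_F(X)\cdot\mu_F(X)\big)\cap X$; (2) if $1\in \mu_F(X)\leadsto(\mu_F(X)\to X)$, then $\mu_F(X)\cdot\mu_F\big(\mu_F(X)\leadsto(\mu_F(X)\to X)\big)\cdot\mu_F(X)=\mu_F(X)$; (3) $\mu_F(X)$ is a filter of $A$ if and only if $1\in \mu_F(X)\cap\big(\mu_F(X)\leadsto(\mu_F(X)\to X)\big)$.
   Context: A quantum B-algebra is a poset $(A,\le)$ with binary operations $\to,\leadsto$ such that for all $x,y,z\in A$: $y\to z\le(x\to y)\to(x\to z)$; $y\leadsto z\le(x\leadsto y)\leadsto(x\leadsto z)$; $y\le z$ implies $x\to y\le x\to z$; and $x\le y\to z$ iff $y\le x\leadsto z$. It is integral if it has a greatest element $1$ with $1\to x=1\leadsto x=x$ for all $x$. $U(A)$ denotes the set of all upper subsets of $A$ (including $\emptyset$), a quantale under inclusion with multiplication $X\cdot Y=\{a\in A\mid\exists y\in Y:\ y\to a\in X\}$. Its residuals are: for $Y,Z\in U(A)$, $Y\to Z$ is the largest $W\in U(A)$ with $W\cdot Y\subseteq Z$, and for $X,Z\in U(A)$, $X\leadsto Z$ is the largest $W\in U(A)$ with $X\cdot W\subseteq Z$. A filter of $A$ is a nonempty $F\in U(A)$ with $F\cdot F\subseteq F$. For $F,X\in U(A)$, $\mu_F(X)=F\cap X$. *)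

theory Defs
  imports Main
begin

text \<open>A quantum B-algebra on the carrier given by the whole type 'a, with partial
order le and the two arrows imp (written \<rightarrow>) and limp (written \<leadsto>).\<close>

definition quantum_B_algebra ::
  "('a \<Rightarrow> 'a \<Rightarrow> bool) \<Rightarrow> ('a \<Rightarrow> 'a \<Rightarrow> 'a) \<Rightarrow> ('a \<Rightarrow> 'a \<Rightarrow> 'a) \<Rightarrow> bool" where
  "quantum_B_algebra le imp limp \<longleftrightarrow>
     (\<forall>x. le x x) \<and>
     (\<forall>x y. le x y \<and> le y x \<longrightarrow> x = y) \<and>
     (\<forall>x y z. le x y \<and> le y z \<longrightarrow> le x z) \<and>
     (\<forall>x y z. le (imp y z) (imp (imp x y) (imp x z))) \<and>
     (\<forall>x y z. le (limp y z) (limp (limp x y) (limp x z))) \<and>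
     (\<forall>x y z. le y z \<longrightarrow> le (imp x y) (imp x z)) \<and>
     (\<forall>x y z. le x (imp y z) \<longleftrightarrow> le y (limp x z))"

definition integral_qBa ::
  "('a \<Rightarrow> 'a \<Rightarrow> bool) \<Rightarrow> ('a \<Rightarrow> 'a \<Rightarrow> 'a) \<Rightarrow> ('a \<Rightarrow> 'a \<Rightarrow> 'a) \<Rightarrow> 'a \<Rightarrow> bool" where
  "integral_qBa le imp limp one \<longleftrightarrow>
     quantum_B_algebra le imp limp \<and>
     (\<forall>x. le x one) \<and> (\<forall>x. imp one x = x \<and> limp one x = x)"

definition upsets :: "('a \<Rightarrow> 'a \<Rightarrow> bool) \<Rightarrow> 'a set set" where
  "upsets le = {X. \<forall>x y. x \<in> X \<and> le x y \<longrightarrow> y \<in> X}"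

definition umult :: "('a \<Rightarrow> 'a \<Rightarrow> 'a) \<Rightarrow> 'a set \<Rightarrow> 'a set \<Rightarrow> 'a set" where
  "umult imp X Y = {a. \<exists>y\<in>Y. imp y a \<in> X}"

text \<open>Residuals in U(A): the largest upper set W with W\<cdot>Y \<subseteq> Z (resp. X\<cdot>W \<subseteq> Z),
  i.e. the union of all such upper sets.\<close>
definition uimp :: "('a \<Rightarrow> 'a \<Rightarrow> bool) \<Rightarrow> ('a \<Rightarrow> 'a \<Rightarrow> 'a) \<Rightarrow> 'a set \<Rightarrow> 'a set \<Rightarrow> 'a set" where
  "uimp le imp Y Z = \<Union>{W \<in> upsets le. umult imp W Y \<subseteq> Z}"

definition ulimp :: "('a \<Rightarrow> 'a \<Rightarrow> bool) \<Rightarrow> ('a \<Rightarrow> 'a \<Rightarrow> 'a) \<Rightarrow> 'a set \<Rightarrow> 'a set \<Rightarrow> 'a set" where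
  "ulimp le imp X Z = \<Union>{W \<in> upsets le. umult imp X W \<subseteq> Z}"

definition qfilter :: "('a \<Rightarrow> 'a \<Rightarrow> bool) \<Rightarrow> ('a \<Rightarrow> 'a \<Rightarrow> 'a) \<Rightarrow> 'a set \<Rightarrow> bool" where
  "qfilter le imp F \<longleftrightarrow> F \<noteq> {} \<and> F \<in> upsets le \<and> umult imp F F \<subseteq> F"

definition mu :: "'a set \<Rightarrow> 'a set \<Rightarrow> 'a set" where
  "mu F X = F \<inter> X"

end

theory Submission
  imports Defs
begin

lemma imp_self_one:
  assumes "integral_qBa le imp limp one"
  shows "imp x x = one"
proof -
  have q: "quantum_B_algebra le imp limp" and t: "\<forall>x. le x one"
    and u: "\<forall>x. imp one x = x \<and> limp one x = x"
    using assms unfolding integral_qBa_def by auto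
  have "le one (imp x x) \<longleftrightarrow> le x (limp one x)" using q unfolding quantum_B_algebra_def by blast
  moreover have "le x x" using q unfolding quantum_B_algebra_def by blast
  ultimately have "le one (imp x x)" using u by simp
  moreover have "le (imp x x) one" using t by blast
  ultimately show ?thesis using q unfolding quantum_B_algebra_def by blast
qed

lemma upset_one:
  assumes "integral_qBa le imp limp one" "X \<in> upsets le" "a \<in> X"
  shows "one \<in> X"
  using assms unfolding integral_qBa_def upsets_def by blast

lemma uimp_mem:
  "a \<in> uimp le imp Y Z \<longleftrightarrow> (\<exists>W. W \<in> upsets le \<and> a \<in> W \<and> umult imp W Y \<subseteq> Z)"
  unfolding uimp_def by blast

lemma ulimp_mem:
  "a \<in> ulimp le imp Y Z \<longleftrightarrow> (\<exists>W. W \<in> upsets le \<and> a \<in> W \<and> umult imp Y W \<subseteq> Z)"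
  unfolding ulimp_def by blast

lemma upsets_Int: "A \<in> upsets le \<Longrightarrow> B \<in> upsets le \<Longrightarrow> A \<inter> B \<in> upsets le"
  unfolding upsets_def by blast

theorem proposition3p2:
  fixes le :: "'a \<Rightarrow> 'a \<Rightarrow> bool" and imp limp :: "'a \<Rightarrow> 'a \<Rightarrow> 'a" and one :: 'a
    and X F :: "'a set"
  assumes "integral_qBa le imp limp one"
    and "X \<in> upsets le" and "F \<in> upsets le"
    and "qfilter le imp F"
  shows "mu F X = umult imp (mu F X) (mu F X) \<inter> X
    \<and> (one \<in> ulimp le imp (mu F X) (uimp le imp (mu F X) X) \<longrightarrow>
         umult imp (umult imp (mu F X) (mu F (ulimp le imp (mu F X) (uimp le imp (mu F X) X))))
               (mu F X) = mu F X)
    \<and> (qfilter le imp (mu F X) \<longleftrightarrow>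
         one \<in> mu F X \<inter> ulimp le imp (mu F X) (uimp le imp (mu F X) X))"
proof -
  note A = assms(1)
  have u: "\<And>x. imp one x = x" using A unfolding integral_qBa_def by auto
  have ii: "\<And>x. imp x x = one" using imp_self_one[OF A] .
  define M where "M = F \<inter> X"
  have MU: "M \<in> upsets le" using upsets_Int assms(2,3) M_def by blast
  have FF: "\<And>y a. y \<in> F \<Longrightarrow> imp y a \<in> F \<Longrightarrow> a \<in> F"
    using assms(4) unfolding qfilter_def umult_def by blast
  have oneF: "one \<in> F" using assms(4) upset_one[OF A assms(3)] unfolding qfilter_def by blast
  have M1: "\<And>a. a \<in> M \<Longrightarrow> one \<in> M" using upset_one[OF A MU] by blast
  define N where "N = ulimp le imp M (uimp le imp M X)"
  have P1: "M = umult imp M M \<inter> X"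
  proof
    show "M \<subseteq> umult imp M M \<inter> X"
    proof
      fix a assume a: "a \<in> M"
      then have "one \<in> M" using M1 by blast
      then have "a \<in> umult imp M M" using a ii unfolding umult_def by (intro CollectI bexI[of _ a]) simp_all
      then show "a \<in> umult imp M M \<inter> X" using a M_def by blast
    qed
    show "umult imp M M \<inter> X \<subseteq> M"
      using FF unfolding umult_def M_def by blast
  qed
  have P2: "one \<in> N \<longrightarrow> umult imp (umult imp M (F \<inter> N)) M = M"
  proof
    assume n1: "one \<in> N"
    show "umult imp (umult imp M (F \<inter> N)) M = M"
    proof
      show "M \<subseteq> umult imp (umult imp M (F \<inter> N)) M"
      proof
        fix a assume a: "a \<in> M"
        then have "one \<in> M" using M1 by blast
        moreover have "a \<in> umult imp M (F \<inter> N)"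
          using a n1 oneF u unfolding umult_def by (intro CollectI bexI[of _ one]) simp_all
        moreover have "imp one a \<in> umult imp M (F \<inter> N)" using calculation(2) u by simp
        ultimately show "a \<in> umult imp (umult imp M (F \<inter> N)) M"
          unfolding umult_def[of imp _ M] by blast
      qed
      show "umult imp (umult imp M (F \<inter> N)) M \<subseteq> M"
      proof
        fix a assume "a \<in> umult imp (umult imp M (F \<inter> N)) M"
        then obtain y z where y: "y \<in> M" and z: "z \<in> F" "z \<in> N" and zy: "imp z (imp y a) \<in> M"
          unfolding umult_def by blast
        obtain W where W: "W \<in> upsets le" "z \<in> W" "umult imp M W \<subseteq> uimp le imp M X"
          using z(2) unfolding N_def ulimp_mem by blast
        have "imp y a \<in> umult imp M W" using W zy unfolding umult_def by blast
        then have "imp y a \<in> uimp le imp M X" using W by blast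
        then obtain V where V: "V \<in> upsets le" "imp y a \<in> V" "umult imp V M \<subseteq> X"
          unfolding uimp_mem by blast
        have "a \<in> X" using V y unfolding umult_def by blast
        moreover have "imp y a \<in> F" using FF z(1) zy M_def by blast
        then have "a \<in> F" using FF y M_def by blast
        ultimately show "a \<in> M" using M_def by blast
      qed
    qed
  qed
  have P3: "qfilter le imp M \<longleftrightarrow> one \<in> M \<inter> N"
  proof
    assume f: "qfilter le imp M"
    then have o: "one \<in> M" using M1 unfolding qfilter_def by blast
    have mm: "umult imp M M \<subseteq> M" using f unfolding qfilter_def by blast
    have "umult imp M M \<subseteq> X" using mm M_def by blast
    then have "M \<subseteq> uimp le imp M X" unfolding uimp_def using MU by blast
    then have "umult imp M M \<subseteq> uimp le imp M X" using mm by blast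
    then have "one \<in> N" unfolding N_def ulimp_mem using MU o by blast
    then show "one \<in> M \<inter> N" using o by blast
  next
    assume o: "one \<in> M \<inter> N"
    then have "one \<in> ulimp le imp M (uimp le imp M X)" unfolding N_def by blast
    then obtain W where W: "W \<in> upsets le" "one \<in> W" "umult imp M W \<subseteq> uimp le imp M X"
      unfolding ulimp_mem by blast
    have "M \<subseteq> umult imp M W" using W(2) u unfolding umult_def by (intro subsetI CollectI bexI[of _ one]) simp_all
    then have MV: "M \<subseteq> uimp le imp M X" using W by blast
    have "umult imp M M \<subseteq> M"
    proof
      fix a assume "a \<in> umult imp M M"
      then obtain y where y: "y \<in> M" "imp y a \<in> M" unfolding umult_def by blast
      then have "imp y a \<in> uimp le imp M X" using MV by blast
      then obtain V where V: "V \<in> upsets le" "imp y a \<in> V" "umult imp V M \<subseteq> X"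
        unfolding uimp_mem by blast
      have "a \<in> X" using V y unfolding umult_def by blast
      moreover have "a \<in> F" using FF y M_def by blast
      ultimately show "a \<in> M" using M_def by blast
    qed
    then show "qfilter le imp M" using o MU unfolding qfilter_def by blast
  qed
  show ?thesis using P1 P2 P3 unfolding M_def N_def mu_def by simp
qed

end
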